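(* Let $n\ge1$ and let $d,m\ge0$ be integers with $m\ne(n-1)(d+1)$. Then $$\bigg(\sum_{j=1}^n\frac{\alpha_j^{m}}{\prod_{k\ne j}(\alpha_j-\alpha_k)^{d+1}}\bigg)\bigg|_{\alpha=0}=0.$$
   Context: $\alpha_1,\dots,\alpha_n$ are variables; $|_{\alpha=0}$ means setting all $\alpha_k=0$ in the rational function. *)

theory Defs
  imports "HOL-Complex_Analysis.Complex_Analysis"
begin

definition S :: "nat \<Rightarrow> nat \<Rightarrow> nat \<Rightarrow> (nat \<Rightarrow> complex) \<Rightarrow> complex" where
  "S n d m \<alpha> = (\<Sum>j=1..n. \<alpha> j ^ m / (\<Prod>k\<in>{1..n} - {j}. (\<alpha> j - \<alpha> k)) ^ (d + 1))"

text \<open>Value at alpha = 0 of a rational function f in alpha_1..alpha_n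
  (defined at least on tuples with distinct coordinates):
  for every admissible direction alpha, the constant coefficient of the Laurent
  expansion at t = 0 of t \<mapsto> f(t alpha) (computed by a small circle integral)
  equals c.  When f is regular at 0 this is exactly f(0); in general it is the
  degree-0 part, i.e. "setting all alpha_k = 0".\<close>
definition at_alpha_zero :: "nat \<Rightarrow> ((nat \<Rightarrow> complex) \<Rightarrow> complex) \<Rightarrow> complex \<Rightarrow> bool" where
  "at_alpha_zero n f c \<longleftrightarrow>
     (\<forall>\<alpha>. inj_on \<alpha> {1..n} \<longrightarrow>
        (\<exists>r>0. \<forall>\<rho>. 0 < \<rho> \<and> \<rho> < r \<longrightarrow>
           ((\<lambda>t. f (\<lambda>i. t * \<alpha> i) / t) has_contour_integral (2 * of_real pi * \<i> * c))
             (circlepath 0 \<rho>)))"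

end

theory Submission
  imports Defs
begin

lemma S_scale:
  fixes t :: complex
  assumes t: "t \<noteq> 0"
  shows "S n d m (\<lambda>i. t * \<alpha> i) = S n d m \<alpha> * (t ^ m / t ^ ((n - 1) * (d + 1)))"
proof -
  have "S n d m (\<lambda>i. t * \<alpha> i) =
        (\<Sum>j=1..n. \<alpha> j ^ m / (\<Prod>k\<in>{1..n} - {j}. (\<alpha> j - \<alpha> k)) ^ (d + 1)
            * (t ^ m / t ^ ((n - 1) * (d + 1))))"
    unfolding S_def
  proof (rule sum.cong[OF refl])
    fix j assume j: "j \<in> {1..n}"
    have c: "card ({1..n} - {j}) = n - 1" using j by simp
    have "(\<Prod>k\<in>{1..n} - {j}. (t * \<alpha> j - t * \<alpha> k)) = t ^ (n - 1) * (\<Prod>k\<in>{1..n} - {j}. (\<alpha> j - \<alpha> k))"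
      using c by (simp add: right_diff_distrib[symmetric] prod.distrib del: One_nat_def)
    then have e: "(\<Prod>k\<in>{1..n} - {j}. (t * \<alpha> j - t * \<alpha> k)) ^ (d + 1) = t ^ ((n - 1) * (d + 1)) * (\<Prod>k\<in>{1..n} - {j}. (\<alpha> j - \<alpha> k)) ^ (d + 1)"
      by (simp only: power_mult_distrib power_mult)
    show "(t * \<alpha> j) ^ m / (\<Prod>k\<in>{1..n} - {j}. (t * \<alpha> j - t * \<alpha> k)) ^ (d + 1) =
      \<alpha> j ^ m / (\<Prod>k\<in>{1..n} - {j}. (\<alpha> j - \<alpha> k)) ^ (d + 1) * (t ^ m / t ^ ((n - 1) * (d + 1)))"
      unfolding e by (simp add: power_mult_distrib mult.commute mult.left_commute)
  qed
  also have "\<dots> = S n d m \<alpha> * (t ^ m / t ^ ((n - 1) * (d + 1)))"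
    unfolding S_def by (simp only: sum_distrib_right)
  finally show ?thesis .
qed

lemma powi_eq:
  fixes t :: complex
  assumes "t \<noteq> 0"
  shows "t ^ m / t ^ N / t = t powi (int m - int N - 1)"
  using assms by (simp add: power_int_diff)

lemma circ_int:
  fixes c :: complex and k :: int and \<rho> :: real
  assumes k: "k \<noteq> -1" and r: "0 < \<rho>"
  shows "((\<lambda>t. c * t powi k) has_contour_integral 0) (circlepath 0 \<rho>)"
proof -
  define F where "F = (\<lambda>t::complex. c * t powi (k + 1) / of_int (k + 1))"
  have k1: "(of_int (k + 1) :: complex) \<noteq> 0" proof -
    have "k + 1 \<noteq> 0" using k by simp
    then show ?thesis by (metis of_int_eq_0_iff)
  qed
  have "((\<lambda>t. c * t powi k) has_contour_integral (F (pathfinish (circlepath 0 \<rho>)) - F (pathstart (circlepath 0 \<rho>)))) (circlepath 0 \<rho>)"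
  proof (rule contour_integral_primitive[where S = "- {0}"])
    fix x :: complex assume x: "x \<in> - {0}"
    have "(F has_field_derivative c * (of_int (k + 1) * x powi (k + 1 - 1) * 1) / of_int (k + 1)) (at x within - {0})"
      unfolding F_def using x by (auto intro!: derivative_eq_intros)
    then show "(F has_field_derivative c * x powi k) (at x within - {0})"
      using k1 by simp
  next
    show "valid_path (circlepath 0 \<rho>)" by simp
    show "path_image (circlepath 0 \<rho>) \<subseteq> - {0}" using r by (auto simp: path_image_circlepath_nonneg)
  qed
  then show ?thesis by simp
qed

theorem lemma3p2:
  fixes n d m :: nat
  assumes "n \<ge> 1" and "m \<noteq> (n - 1) * (d + 1)"
  shows "at_alpha_zero n (S n d m) 0"
  unfolding at_alpha_zero_def
proof (intro allI impI)
  fix \<alpha> :: "nat \<Rightarrow> complex"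
  assume "inj_on \<alpha> {1..n}"
  show "\<exists>r>0. \<forall>\<rho>. 0 < \<rho> \<and> \<rho> < r \<longrightarrow>
           ((\<lambda>t. S n d m (\<lambda>i. t * \<alpha> i) / t) has_contour_integral (2 * of_real pi * \<i> * 0)) (circlepath 0 \<rho>)"
  proof (intro exI[of _ 1] conjI allI impI)
    fix \<rho> :: real assume r: "0 < \<rho> \<and> \<rho> < 1"
    define k where "k = int m - int ((n - 1) * (d + 1)) - 1"
    have k: "k \<noteq> -1" using assms(2) unfolding k_def by linarith
    have "((\<lambda>t. S n d m \<alpha> * t powi k) has_contour_integral 0) (circlepath 0 \<rho>)"
      using circ_int[OF k] r by blast
    then have "((\<lambda>t. S n d m (\<lambda>i. t * \<alpha> i) / t) has_contour_integral 0) (circlepath 0 \<rho>)"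
    proof (rule has_contour_integral_eq)
      fix x assume "x \<in> path_image (circlepath 0 \<rho>)"
      then have x: "x \<noteq> 0" using r by (auto simp: path_image_circlepath_nonneg)
      have "S n d m (\<lambda>i. x * \<alpha> i) / x = S n d m \<alpha> * (x ^ m / x ^ ((n - 1) * (d + 1)) / x)"
        unfolding S_scale[OF x] by (simp only: times_divide_eq_right)
      also have "\<dots> = S n d m \<alpha> * x powi k"
        unfolding k_def powi_eq[OF x] ..
      finally show "S n d m \<alpha> * x powi k = S n d m (\<lambda>i. x * \<alpha> i) / x" by simp
    qed
    then show "((\<lambda>t. S n d m (\<lambda>i. t * \<alpha> i) / t) has_contour_integral (2 * of_real pi * \<i> * 0)) (circlepath 0 \<rho>)"
      by simp
  qed simp
qed

end
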